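(* Let $\gamma_X=(X,d_X)$ and $\gamma_Y=(Y,d_Y)$ be two dynamic metric spaces and let $\delta>0$. Then for every $X'\subseteq X$ there exists $Y'\subseteq Y$ with $|Y'|\le|X'|$ and $d_{\mathrm{dyn}}(\gamma_{X'},\gamma_{Y'})\le d_{\mathrm{dyn}}(\gamma_X,\gamma_Y)+\delta$.
   Context: A dynamic metric space $\gamma_X=(X,d_X(\cdot))$ is a finite set $X$ with $d_X:\mathbb{R}\times X\times X\to\mathbb{R}_{\ge0}$ such that each $d_X(t)$ is a pseudometric and each $t\mapsto d_X(t)(x,x')$ is continuous; for $X'\subseteq X$, $\gamma_{X'}=(X',d_X|_{X'})$. A tripod between sets $X,Y$ is a set $Z$ with surjections $\varphi_X:Z\to X$, $\varphi_Y:Z\to Y$. It is a $(2,\varepsilon)$-tripod if for all $t\in\mathbb{R}$ and $z,z'\in Z$: $\min_{t'\in[t-\varepsilon,t+\varepsilon]}d_X(t')(\varphi_Xz,\varphi_Xz')\le d_Y(t)(\varphi_Yz,\varphi_Yz')+2\varepsilon$ and $\min_{t'\in[t-\varepsilon,t+\varepsilon]}d_Y(t')(\varphi_Yz,\varphi_Yz')\le d_X(t)(\varphi_Xz,\varphi_Xz')+2\varepsilon$. The distortion of a tripod is the infimum of $\varepsilon>0$ for which it is a $(2,\varepsilon)$-tripod, and $d_{\mathrm{dyn}}(\gamma_X,\gamma_Y)$ is the infimum of distortions over all tripods between $X$ and $Y$. *)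

theory Defs
  imports "HOL-Analysis.Analysis" "HOL-Library.Extended_Real"
begin

definition pseudometric_on :: "'a set \<Rightarrow> ('a \<Rightarrow> 'a \<Rightarrow> real) \<Rightarrow> bool" where
  "pseudometric_on X d \<longleftrightarrow>
     (\<forall>x\<in>X. d x x = 0) \<and>
     (\<forall>x\<in>X. \<forall>y\<in>X. d x y \<ge> 0 \<and> d x y = d y x) \<and>
     (\<forall>x\<in>X. \<forall>y\<in>X. \<forall>z\<in>X. d x z \<le> d x y + d y z)"

definition dyn_metric_space :: "'a set \<Rightarrow> (real \<Rightarrow> 'a \<Rightarrow> 'a \<Rightarrow> real) \<Rightarrow> bool" where
  "dyn_metric_space X d \<longleftrightarrow> finite X \<and>
     (\<forall>t. pseudometric_on X (d t)) \<and>
     (\<forall>x\<in>X. \<forall>x'\<in>X. continuous_on UNIV (\<lambda>t. d t x x'))"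

definition tripod :: "'a set \<Rightarrow> 'b set \<Rightarrow> 'z set \<Rightarrow> ('z \<Rightarrow> 'a) \<Rightarrow> ('z \<Rightarrow> 'b) \<Rightarrow> bool" where
  "tripod X Y Z fX fY \<longleftrightarrow> fX ` Z = X \<and> fY ` Z = Y"

text \<open>Minimum of d(t') over t' in [t-e, t+e] (attained by continuity).\<close>
definition win_min :: "(real \<Rightarrow> 'a \<Rightarrow> 'a \<Rightarrow> real) \<Rightarrow> real \<Rightarrow> real \<Rightarrow> 'a \<Rightarrow> 'a \<Rightarrow> real" where
  "win_min d e t x x' = Inf ((\<lambda>t'. d t' x x') ` {t - e .. t + e})"

definition is_2eps_tripod ::
  "(real \<Rightarrow> 'a \<Rightarrow> 'a \<Rightarrow> real) \<Rightarrow> (real \<Rightarrow> 'b \<Rightarrow> 'b \<Rightarrow> real) \<Rightarrow>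
   'z set \<Rightarrow> ('z \<Rightarrow> 'a) \<Rightarrow> ('z \<Rightarrow> 'b) \<Rightarrow> real \<Rightarrow> bool" where
  "is_2eps_tripod dX dY Z fX fY e \<longleftrightarrow>
     (\<forall>t. \<forall>z\<in>Z. \<forall>z'\<in>Z.
        win_min dX e t (fX z) (fX z') \<le> dY t (fY z) (fY z') + 2 * e \<and>
        win_min dY e t (fY z) (fY z') \<le> dX t (fX z) (fX z') + 2 * e)"

text \<open>Distortion: infimum of \<epsilon> > 0 for which the tripod is a (2,\<epsilon>)-tripod
  (in the extended reals, \<infinity> if there is none).\<close>
definition distortion ::
  "(real \<Rightarrow> 'a \<Rightarrow> 'a \<Rightarrow> real) \<Rightarrow> (real \<Rightarrow> 'b \<Rightarrow> 'b \<Rightarrow> real) \<Rightarrow>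
   'z set \<Rightarrow> ('z \<Rightarrow> 'a) \<Rightarrow> ('z \<Rightarrow> 'b) \<Rightarrow> ereal" where
  "distortion dX dY Z fX fY = Inf {ereal e | e. e > 0 \<and> is_2eps_tripod dX dY Z fX fY e}"

text \<open>Tripods are taken with parameter set Z \<subseteq> X \<times> Y and
  the coordinate projections; every tripod (Z, fX, fY) has the same distortion as
  its image {(fX z, fY z) | z \<in> Z} with the projections, so this infimum equals
  the infimum over all tripods.\<close>
definition d_dyn ::
  "'a set \<Rightarrow> (real \<Rightarrow> 'a \<Rightarrow> 'a \<Rightarrow> real) \<Rightarrow> 'b set \<Rightarrow> (real \<Rightarrow> 'b \<Rightarrow> 'b \<Rightarrow> real) \<Rightarrow> ereal" where
  "d_dyn X dX Y dY = Inf {distortion dX dY Z fst snd | Z. Z \<subseteq> X \<times> Y \<and> tripod X Y Z fst snd}"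

end

theory Submission
  imports Defs
begin

lemma distortion_nonneg: "0 \<le> distortion dX dY Z fX fY"
  unfolding distortion_def by (rule Inf_greatest) auto

lemma d_dyn_nonneg: "0 \<le> d_dyn X dX Y dY"
  unfolding d_dyn_def by (rule Inf_greatest) (auto simp: distortion_nonneg)

theorem mainTheorem12:
  fixes X :: "'a set" and dX :: "real \<Rightarrow> 'a \<Rightarrow> 'a \<Rightarrow> real"
    and Y :: "'b set" and dY :: "real \<Rightarrow> 'b \<Rightarrow> 'b \<Rightarrow> real"
    and \<delta> :: real and X' :: "'a set"
  assumes "dyn_metric_space X dX" and "dyn_metric_space Y dY"
    and "\<delta> > 0" and "X' \<subseteq> X"
  shows "\<exists>Y'. Y' \<subseteq> Y \<and> card Y' \<le> card X' \<and>
           d_dyn X' dX Y' dY \<le> d_dyn X dX Y dY + ereal \<delta>"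
proof (cases "d_dyn X dX Y dY = \<infinity>")
  case True
  then show ?thesis by (intro exI[of _ "{}"]) auto
next
  case False
  define d where "d = d_dyn X dX Y dY"
  have d0: "0 \<le> d" unfolding d_def by (rule d_dyn_nonneg)
  have dlt: "d < d + ereal \<delta>" using False d0 \<open>\<delta> > 0\<close> unfolding d_def[symmetric]
    by (cases d) auto
  then obtain Z where Z: "Z \<subseteq> X \<times> Y" "tripod X Y Z fst snd"
    and Zl: "distortion dX dY Z fst snd < d + ereal \<delta>"
    unfolding d_def d_dyn_def by (auto simp: Inf_less_iff)
  then obtain e where e: "e > 0" "is_2eps_tripod dX dY Z fst snd e" "ereal e < d + ereal \<delta>"
    unfolding distortion_def by (auto simp: Inf_less_iff)
  have fin: "finite X'" using assms(1,4) unfolding dyn_metric_space_def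
    using finite_subset by blast
  have ex: "\<And>x. x \<in> X' \<Longrightarrow> (x, SOME y. (x,y) \<in> Z) \<in> Z"
  proof -
    fix x assume "x \<in> X'"
    then have "x \<in> fst ` Z" using Z(2) assms(4) unfolding tripod_def by auto
    then obtain y where "(x,y) \<in> Z" by force
    then show "(x, SOME y. (x,y) \<in> Z) \<in> Z" by (rule someI)
  qed
  define Z' where "Z' = (\<lambda>x. (x, SOME y. (x,y) \<in> Z)) ` X'"
  define Y' where "Y' = snd ` Z'"
  have Z'Z: "Z' \<subseteq> Z" using ex unfolding Z'_def by auto
  have fstZ': "fst ` Z' = X'" unfolding Z'_def by (simp add: image_image)
  have "Y' \<subseteq> Y" using Z'Z Z(1) unfolding Y'_def by auto
  moreover have "card Y' \<le> card X'"
  proof -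
    have "card Y' \<le> card Z'" unfolding Y'_def using fin Z'_def by (simp add: card_image_le)
    also have "card Z' \<le> card X'" unfolding Z'_def using fin by (simp add: card_image_le)
    finally show ?thesis .
  qed
  moreover have "d_dyn X' dX Y' dY \<le> ereal e"
  proof -
    have tr: "Z' \<subseteq> X' \<times> Y'" "tripod X' Y' Z' fst snd"
      using fstZ' unfolding Y'_def tripod_def by force+
    have "is_2eps_tripod dX dY Z' fst snd e" using e(2) Z'Z unfolding is_2eps_tripod_def by blast
    then have "distortion dX dY Z' fst snd \<le> ereal e"
      unfolding distortion_def using e(1) by (intro Inf_lower) auto
    moreover have "d_dyn X' dX Y' dY \<le> distortion dX dY Z' fst snd"
      unfolding d_dyn_def using tr by (intro Inf_lower) auto
    ultimately show ?thesis by simp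
  qed
  ultimately show ?thesis using e(3) unfolding d_def by (intro exI[of _ Y']) auto
qed

end
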